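(* For every choice of parameters for which the diffusion admits an invariant probability measure $\mu_\star$, one has $\int_{\mathbb R^4}\exp(\beta H(x))\,\mu_\star(dx)=\infty$ for every $\beta>1/T$.
   Context: Fix $\alpha,\gamma,T,T_\infty>0$, $k\in\mathbb R$, and an even $C^2$ function $V_1$ with $V_1(x)=\frac{|x|^{2k}}{2k}+R_1(x)$ (for $k=0$: $V_1=c+R_1$), $\sup_{|x|>1}\max_{m\le2}|R_1^{(m)}(x)|/|x|^{2k-1-m}<\infty$. On $\mathbb R^4\ni x=(p_0,q_0,p_1,q_1)$, $H=\frac{p_0^2+p_1^2}2+V_1(q_0)+V_1(q_1)+\frac\alpha2(q_0-q_1)^2$. The diffusion is $dq_i=p_idt$, $dp_0=-V_1'(q_0)dt+\alpha(q_1-q_0)dt-\gamma p_0dt+\sqrt{2\gamma T}dw_0$, $dp_1=-V_1'(q_1)dt+\alpha(q_0-q_1)dt+\sqrt{2\gamma T_\infty}dw_1$, $w_0,w_1$ independent Brownian motions. *)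

theory Defs
  imports "HOL-Analysis.Analysis" "HOL-Probability.Probability"
begin

text \<open>State space R^4 with coordinates x = (p0, q0, p1, q1).\<close>
type_synonym state = "real \<times> real \<times> real \<times> real"

definition e_p0 :: state where "e_p0 = (1, 0, 0, 0)"
definition e_q0 :: state where "e_q0 = (0, 1, 0, 0)"
definition e_p1 :: state where "e_p1 = (0, 0, 1, 0)"
definition e_q1 :: state where "e_q1 = (0, 0, 0, 1)"

definition coord_dirs :: "state set" where
  "coord_dirs = {e_p0, e_q0, e_p1, e_q1}"

definition pd :: "(state \<Rightarrow> real) \<Rightarrow> state \<Rightarrow> state \<Rightarrow> real" where
  "pd f v x = deriv (\<lambda>t. f (x + t *\<^sub>R v)) 0"

definition has_pd :: "(state \<Rightarrow> real) \<Rightarrow> bool" where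
  "has_pd f \<longleftrightarrow> (\<forall>v\<in>coord_dirs. \<forall>x.
      ((\<lambda>t. f (x + t *\<^sub>R v)) has_real_derivative pd f v x) (at 0))"

definition C2_R4 :: "(state \<Rightarrow> real) \<Rightarrow> bool" where
  "C2_R4 f \<longleftrightarrow> continuous_on UNIV f \<and> has_pd f \<and>
     (\<forall>v\<in>coord_dirs. continuous_on UNIV (pd f v) \<and> has_pd (pd f v) \<and>
        (\<forall>w\<in>coord_dirs. continuous_on UNIV (pd (pd f v) w)))"

definition test_fun :: "(state \<Rightarrow> real) \<Rightarrow> bool" where
  "test_fun f \<longleftrightarrow> C2_R4 f \<and> compact (closure {x. f x \<noteq> 0})"

definition C2_real :: "(real \<Rightarrow> real) \<Rightarrow> bool" where
  "C2_real V \<longleftrightarrow> (\<forall>x. V differentiable (at x)) \<and> (\<forall>x. deriv V differentiable (at x))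
     \<and> continuous_on UNIV (deriv (deriv V))"

definition admissible_V1 :: "real \<Rightarrow> (real \<Rightarrow> real) \<Rightarrow> bool" where
  "admissible_V1 k V1 \<longleftrightarrow> C2_real V1 \<and> (\<forall>x. V1 (- x) = V1 x) \<and>
     (\<exists>c B. let R1 = (\<lambda>x. V1 x - (if k = 0 then c else \<bar>x\<bar> powr (2*k) / (2*k)))
      in \<forall>x. \<bar>x\<bar> > 1 \<longrightarrow> (\<forall>m::nat. m \<le> 2 \<longrightarrow>
            \<bar>(deriv ^^ m) R1 x\<bar> \<le> B * \<bar>x\<bar> powr (2*k - 1 - real m)))"

definition Ham :: "real \<Rightarrow> (real \<Rightarrow> real) \<Rightarrow> state \<Rightarrow> real" where
  "Ham \<alpha> V1 x = (case x of (p0, q0, p1, q1) \<Rightarrow>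
     (p0^2 + p1^2) / 2 + V1 q0 + V1 q1 + \<alpha> / 2 * (q0 - q1)^2)"

definition gen :: "real \<Rightarrow> real \<Rightarrow> real \<Rightarrow> real \<Rightarrow> (real \<Rightarrow> real) \<Rightarrow> (state \<Rightarrow> real) \<Rightarrow> state \<Rightarrow> real" where
  "gen \<alpha> \<gamma> T Tinf V1 f x = (case x of (p0, q0, p1, q1) \<Rightarrow>
       p0 * pd f e_q0 x + p1 * pd f e_q1 x
     + (- deriv V1 q0 + \<alpha> * (q1 - q0) - \<gamma> * p0) * pd f e_p0 x
     + (- deriv V1 q1 + \<alpha> * (q0 - q1)) * pd f e_p1 x
     + \<gamma> * T * pd (pd f e_p0) e_p0 x
     + \<gamma> * Tinf * pd (pd f e_p1) e_p1 x)"

text \<open>Invariant probability measure (in the infinitesimal / weak Fokker-Planck sense).\<close>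
definition invariant_prob :: "real \<Rightarrow> real \<Rightarrow> real \<Rightarrow> real \<Rightarrow> (real \<Rightarrow> real) \<Rightarrow> state measure \<Rightarrow> bool" where
  "invariant_prob \<alpha> \<gamma> T Tinf V1 M \<longleftrightarrow> prob_space M \<and> sets M = sets borel \<and>
     (\<forall>f. test_fun f \<longrightarrow> integrable M (gen \<alpha> \<gamma> T Tinf V1 f) \<and>
          (\<integral>x. gen \<alpha> \<gamma> T Tinf V1 f x \<partial>M) = 0)"

end

theory Submission
  imports Defs
begin


lemma deriv_split:
  fixes f g h :: "real \<Rightarrow> real"
  assumes g: "DERIV g a :> D" and h: "DERIV h a :> D"
    and fg: "\<And>x. x \<le> a \<Longrightarrow> f x = g x" and fh: "\<And>x. x \<ge> a \<Longrightarrow> f x = h x"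
  shows "DERIV f a :> D"
proof -
  have 1: "(f has_field_derivative D) (at a within {..a})"
    by (rule has_field_derivative_transform_within[of g D a "{..a}" 1])
       (auto intro: has_field_derivative_at_within g simp: fg)
  have 2: "(f has_field_derivative D) (at a within {a..})"
    by (rule has_field_derivative_transform_within[of h D a "{a..}" 1])
       (auto intro: has_field_derivative_at_within h simp: fh)
  have U: "at a = sup (at a within {..a}) (at a within {a..})"
  proof -
    have "{..a} \<union> {a..} = (UNIV::real set)" by auto
    then show ?thesis using at_within_union[of a "{..a}" "{a..}"] by simp
  qed
  show ?thesis
    using 1 2 unfolding has_field_derivative_iff by (subst U) (rule filterlim_sup)
qed


definition rho :: "real \<Rightarrow> real" where
  "rho s = (if s \<le> 0 then 1 else if 1 \<le> s then 0 else 1 - 10* s ^ 3 + 15* s ^ 4 - 6* s ^ 5)"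
definition rho1 :: "real \<Rightarrow> real" where
  "rho1 s = (if s \<le> 0 then 0 else if 1 \<le> s then 0 else -30* s ^ 2 + 60* s ^ 3 - 30* s ^ 4)"
definition rho2 :: "real \<Rightarrow> real" where
  "rho2 s = (if s \<le> 0 then 0 else if 1 \<le> s then 0 else -60* s + 180* s ^ 2 - 120* s ^ 3)"

lemma deriv_split3:
  fixes f g h :: "real \<Rightarrow> real"
  assumes g: "DERIV g a :> D" and h: "DERIV h a :> D" and d: "d > 0"
    and fg: "\<And>x. x \<le> a \<Longrightarrow> a - d < x \<Longrightarrow> f x = g x" and fh: "\<And>x. x \<ge> a \<Longrightarrow> x < a + d \<Longrightarrow> f x = h x"
  shows "DERIV f a :> D"
proof -
  have 1: "(f has_field_derivative D) (at a within {..a})"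
    by (rule has_field_derivative_transform_within[of g D a "{..a}" d])
       (auto intro: has_field_derivative_at_within g simp: fg d dist_real_def)
  have 2: "(f has_field_derivative D) (at a within {a..})"
    by (rule has_field_derivative_transform_within[of h D a "{a..}" d])
       (auto intro: has_field_derivative_at_within h simp: fh d dist_real_def)
  have U: "at a = sup (at a within {..a}) (at a within {a..})"
  proof -
    have "{..a} \<union> {a..} = (UNIV::real set)" by auto
    then show ?thesis using at_within_union[of a "{..a}" "{a..}"] by simp
  qed
  show ?thesis
    using 1 2 unfolding has_field_derivative_iff by (subst U) (rule filterlim_sup)
qed

lemma piece3_deriv:
  fixes F F1 P P1 :: "real \<Rightarrow> real" and A B :: real
  assumes F: "\<And>s. F s = (if s \<le> 0 then A else if 1 \<le> s then B else P s)"
    and F1: "\<And>s. F1 s = (if s \<le> 0 then 0 else if 1 \<le> s then 0 else P1 s)"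
    and P: "\<And>s. DERIV P s :> P1 s" and P0: "P1 0 = 0" and P1: "P1 1 = 0"
    and PA: "P 0 = A" and PB: "P 1 = B"
  shows "DERIV F s :> F1 s"
proof -
  consider "s < 0" | "s = 0" | "0 < s \<and> s < 1" | "s = 1" | "s > 1" by linarith
  then show ?thesis
  proof cases
    case 1
    show ?thesis
      by (rule has_field_derivative_transform_within_open[of "\<lambda>_. A" _ s "{..<0}"])
         (use 1 in \<open>auto simp: F F1\<close>)
  next
    case 2
    show ?thesis
      by (rule deriv_split3[where g="\<lambda>_. A" and h=P and d=1]) (use 2 P[of 0] PA in \<open>auto simp: F F1 P0\<close>)
  next
    case 3
    show ?thesis
      by (rule has_field_derivative_transform_within_open[of P _ s "{0<..<1}"])
         (use 3 P in \<open>auto simp: F F1\<close>)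
  next
    case 4
    show ?thesis
      by (rule deriv_split3[where g=P and h="\<lambda>_. B" and d=1]) (use 4 P[of 1] PB in \<open>auto simp: F F1 P1\<close>)
  next
    case 5
    show ?thesis
      by (rule has_field_derivative_transform_within_open[of "\<lambda>_. B" _ s "{1<..}"])
         (use 5 in \<open>auto simp: F F1\<close>)
  qed
qed

lemma rho_deriv: "DERIV rho s :> rho1 s"
  by (rule piece3_deriv[OF rho_def rho1_def])
     (auto intro!: derivative_eq_intros simp: algebra_simps)

lemma rho1_deriv: "DERIV rho1 s :> rho2 s"
  by (rule piece3_deriv[OF rho1_def rho2_def])
     (auto intro!: derivative_eq_intros simp: algebra_simps)

lemma rho2_cont: "continuous_on UNIV rho2"
proof -
  have eq: "rho2 = (\<lambda>s. (\<lambda>t. -60*t + 180*t ^ 2 - 120*t ^ 3) (min 1 (max 0 s)))"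
    by (auto simp: rho2_def fun_eq_iff)
  show ?thesis unfolding eq by (intro continuous_intros)
qed



definition C2F :: "(state \<Rightarrow> real) \<Rightarrow> (state \<Rightarrow> state \<Rightarrow> real) \<Rightarrow> (state \<Rightarrow> state \<Rightarrow> state \<Rightarrow> real) \<Rightarrow> bool" where
  "C2F g dg d2g \<longleftrightarrow> (\<forall>x. (g has_derivative dg x) (at x)) \<and>
     (\<forall>x h. ((\<lambda>y. dg y h) has_derivative d2g x h) (at x)) \<and>
     (\<forall>h k. continuous_on UNIV (\<lambda>x. d2g x h k))"

lemma slice_deriv:
  assumes "(g has_derivative L) (at x)"
  shows "((\<lambda>t. g (x + t *\<^sub>R v)) has_real_derivative L v) (at 0)"
proof -
  have 1: "((\<lambda>t::real. x + t *\<^sub>R v) has_derivative (\<lambda>t. t *\<^sub>R v)) (at 0)"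
    by (auto intro!: derivative_eq_intros)
  have 2: "(g has_derivative L) (at ((\<lambda>t::real. x + t *\<^sub>R v) 0))" using assms by simp
  have "((\<lambda>t. g (x + t *\<^sub>R v)) has_derivative (\<lambda>t. L (t *\<^sub>R v))) (at 0)"
    using has_derivative_compose[OF 1 2] by simp
  moreover have "(\<lambda>t. L (t *\<^sub>R v)) = (\<lambda>t. L v * t)"
    using has_derivative_bounded_linear[OF assms]
    by (auto simp: fun_eq_iff linear_cmul[OF bounded_linear.linear])
  ultimately show ?thesis unfolding has_field_derivative_def by simp
qed

lemma C2F_pd: "C2F g dg d2g \<Longrightarrow> pd g v x = dg x v"
  unfolding pd_def C2F_def by (intro DERIV_imp_deriv slice_deriv) blast

lemma C2F_pd_fun: "C2F g dg d2g \<Longrightarrow> pd g v = (\<lambda>x. dg x v)"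
  using C2F_pd by blast

lemma C2F_pd2: assumes "C2F g dg d2g" shows "pd (pd g v) w x = d2g x v w"
proof -
  have e: "pd g v = (\<lambda>x. dg x v)" using C2F_pd_fun[OF assms] .
  have "((\<lambda>t. (\<lambda>x. dg x v) (x + t *\<^sub>R w)) has_real_derivative d2g x v w) (at 0)"
    by (rule slice_deriv) (use assms in \<open>unfold C2F_def, blast\<close>)
  then show ?thesis unfolding e pd_def by (rule DERIV_imp_deriv)
qed

lemma C2F_C2: assumes "C2F g dg d2g" shows "C2_R4 g"
proof -
  have d1: "\<And>x. (g has_derivative dg x) (at x)" and d2: "\<And>x h. ((\<lambda>y. dg y h) has_derivative d2g x h) (at x)"
    and c: "\<And>h k. continuous_on UNIV (\<lambda>x. d2g x h k)" using assms unfolding C2F_def by auto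
  have e: "pd g v = (\<lambda>x. dg x v)" for v using C2F_pd_fun[OF assms] .
  have e2: "pd (pd g v) w = (\<lambda>x. d2g x v w)" for v w using C2F_pd2[OF assms] by blast
  have "continuous_on UNIV g" by (rule has_derivative_continuous_on) (use d1 has_derivative_at_withinI in blast)
  moreover have "has_pd g" unfolding has_pd_def e using slice_deriv[OF d1] by blast
  moreover have "continuous_on UNIV (pd g v)" for v
    unfolding e by (rule has_derivative_continuous_on) (use d2 has_derivative_at_withinI in blast)
  moreover have "has_pd (pd g v)" for v unfolding has_pd_def e2 unfolding e
    using slice_deriv[OF d2] by blast
  moreover have "continuous_on UNIV (pd (pd g v) w)" for v w
    unfolding e2 by (rule c)
  ultimately show ?thesis unfolding C2_R4_def by blast
qed



lemma C2F_cont: "C2F g dg d2g \<Longrightarrow> continuous_on UNIV g"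
  unfolding C2F_def by (metis has_derivative_continuous_on has_derivative_at_withinI)

lemma C2F_cont1: "C2F g dg d2g \<Longrightarrow> continuous_on UNIV (\<lambda>x. dg x h)"
  unfolding C2F_def by (metis has_derivative_continuous_on has_derivative_at_withinI)

lemma DERIV_cont_on: "(\<And>s. DERIV P s :> P1 s) \<Longrightarrow> continuous_on UNIV P"
  by (meson DERIV_isCont continuous_at_imp_continuous_on)

lemma C2F_comp:
  assumes g: "C2F g dg d2g" and P: "\<And>s. DERIV P s :> P1 s" "\<And>s. DERIV P1 s :> P2 s" "continuous_on UNIV P2"
  shows "C2F (\<lambda>x. P (g x)) (\<lambda>x h. P1 (g x) * dg x h) (\<lambda>x h k. P2 (g x) * dg x k * dg x h + P1 (g x) * d2g x h k)"
proof -
  have d1: "\<And>x. (g has_derivative dg x) (at x)" and d2: "\<And>x h. ((\<lambda>y. dg y h) has_derivative d2g x h) (at x)"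
    and c: "\<And>h k. continuous_on UNIV (\<lambda>x. d2g x h k)" using g unfolding C2F_def by auto
  have A: "((\<lambda>x. P (g x)) has_derivative (\<lambda>h. P1 (g x) * dg x h)) (at x)" for x
    by (rule has_derivative_eq_rhs[OF DERIV_compose_FDERIV[OF P(1) d1]]) (simp add: fun_eq_iff mult.commute)
  have B: "((\<lambda>y. P1 (g y) * dg y h) has_derivative (\<lambda>k. P2 (g x) * dg x k * dg x h + P1 (g x) * d2g x h k)) (at x)" for x h
    by (rule has_derivative_eq_rhs[OF has_derivative_mult[OF DERIV_compose_FDERIV[OF P(2) d1] d2]])
       (simp add: fun_eq_iff algebra_simps)
  have gc: "continuous_on UNIV g" using C2F_cont[OF g] .
  have c1: "continuous_on UNIV (\<lambda>x. P1 (g x))"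
    by (rule continuous_on_compose2[OF DERIV_cont_on[OF P(2)] gc]) auto
  have c2: "continuous_on UNIV (\<lambda>x. P2 (g x))"
    by (rule continuous_on_compose2[OF P(3) gc]) auto
  have C: "continuous_on UNIV (\<lambda>x. P2 (g x) * dg x k * dg x h + P1 (g x) * d2g x h k)" for h k
    using c1 c2 C2F_cont1[OF g] c by (intro continuous_intros) auto
  show ?thesis unfolding C2F_def using A B C by blast
qed

lemma C2F_mult:
  assumes f: "C2F f df d2f" and g: "C2F g dg d2g"
  shows "C2F (\<lambda>x. f x * g x) (\<lambda>x h. f x * dg x h + df x h * g x)
     (\<lambda>x h k. df x k * dg x h + f x * d2g x h k + d2f x h k * g x + df x h * dg x k)"
proof -
  have f1: "\<And>x. (f has_derivative df x) (at x)" and f2: "\<And>x h. ((\<lambda>y. df y h) has_derivative d2f x h) (at x)"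
    and fc: "\<And>h k. continuous_on UNIV (\<lambda>x. d2f x h k)" using f unfolding C2F_def by auto
  have g1: "\<And>x. (g has_derivative dg x) (at x)" and g2: "\<And>x h. ((\<lambda>y. dg y h) has_derivative d2g x h) (at x)"
    and gc: "\<And>h k. continuous_on UNIV (\<lambda>x. d2g x h k)" using g unfolding C2F_def by auto
  have A: "((\<lambda>x. f x * g x) has_derivative (\<lambda>h. f x * dg x h + df x h * g x)) (at x)" for x
    by (rule has_derivative_mult[OF f1 g1])
  have B: "((\<lambda>y. f y * dg y h + df y h * g y) has_derivative (\<lambda>k. df x k * dg x h + f x * d2g x h k + d2f x h k * g x + df x h * dg x k)) (at x)" for x h
    by (rule has_derivative_eq_rhs[OF has_derivative_add[OF has_derivative_mult[OF f1 g2] has_derivative_mult[OF f2 g1]]])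
       (simp add: fun_eq_iff algebra_simps)
  have C: "continuous_on UNIV (\<lambda>x. df x k * dg x h + f x * d2g x h k + d2f x h k * g x + df x h * dg x k)" for h k
    using C2F_cont[OF f] C2F_cont[OF g] C2F_cont1[OF f] C2F_cont1[OF g] fc gc by (intro continuous_intros) auto
  show ?thesis unfolding C2F_def using A B C by blast
qed



lemma chain_eq:
  fixes V V1 :: "real \<Rightarrow> real"
  assumes V: "\<And>s. DERIV V s :> V1 s" and g: "(g has_derivative g') (at x within S)"
    and D: "D = (\<lambda>h. g' h * V1 (g x))"
  shows "((\<lambda>x. V (g x)) has_derivative D) (at x within S)"
  unfolding D by (rule DERIV_compose_FDERIV[OF V[of "g x"] g])

definition dH :: "real \<Rightarrow> (real \<Rightarrow> real) \<Rightarrow> state \<Rightarrow> state \<Rightarrow> real" where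
  "dH \<alpha> V' x h = fst x * fst h + V' (fst (snd x)) * fst (snd h) + fst (snd (snd x)) * fst (snd (snd h))
     + V' (snd (snd (snd x))) * snd (snd (snd h)) + \<alpha> * (fst (snd x) - snd (snd (snd x))) * (fst (snd h) - snd (snd (snd h)))"

definition d2H :: "real \<Rightarrow> (real \<Rightarrow> real) \<Rightarrow> state \<Rightarrow> state \<Rightarrow> state \<Rightarrow> real" where
  "d2H \<alpha> V2 x h k = fst k * fst h + V2 (fst (snd x)) * fst (snd k) * fst (snd h) + fst (snd (snd k)) * fst (snd (snd h))
     + V2 (snd (snd (snd x))) * snd (snd (snd k)) * snd (snd (snd h)) + \<alpha> * (fst (snd k) - snd (snd (snd k))) * (fst (snd h) - snd (snd (snd h)))"

lemma Ham_eq: "Ham \<alpha> V = (\<lambda>x. (fst x ^ 2 + fst (snd (snd x)) ^ 2) / 2 + V (fst (snd x)) + V (snd (snd (snd x)))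
     + \<alpha> / 2 * (fst (snd x) - snd (snd (snd x))) ^ 2)"
  by (auto simp: Ham_def fun_eq_iff split: prod.splits)

lemma chain_at:
  fixes V V1 :: "real \<Rightarrow> real"
  assumes V: "\<And>s. DERIV V s :> V1 s"
  shows "((\<lambda>x::state. V (fst (snd x))) has_derivative (\<lambda>h. V1 (fst (snd x)) * fst (snd h))) (at x)"
    and "((\<lambda>x::state. V (snd (snd (snd x)))) has_derivative (\<lambda>h. V1 (snd (snd (snd x))) * snd (snd (snd h)))) (at x)"
  by (rule chain_eq[OF V], (rule derivative_intros)+, simp add: fun_eq_iff mult.commute)+

lemma C2F_Ham:
  assumes V: "\<And>s. DERIV V s :> V1 s" "\<And>s. DERIV V1 s :> V2 s" "continuous_on UNIV V2"
  shows "C2F (Ham \<alpha> V) (dH \<alpha> V1) (d2H \<alpha> V2)"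
proof -
  note c1 = chain_at[OF V(1)] and c2 = chain_at[OF V(2)]
  have A: "(Ham \<alpha> V has_derivative dH \<alpha> V1 x) (at x)" for x
    unfolding Ham_eq
    by (auto intro!: derivative_eq_intros c1 simp: fun_eq_iff dH_def algebra_simps power2_eq_square)
  have B: "((\<lambda>y. dH \<alpha> V1 y h) has_derivative d2H \<alpha> V2 x h) (at x)" for x h
    unfolding dH_def
    by (auto intro!: derivative_eq_intros c2 simp: fun_eq_iff d2H_def algebra_simps)
  have C: "continuous_on UNIV (\<lambda>x. d2H \<alpha> V2 x h k)" for h k
    unfolding d2H_def
    by (intro continuous_intros continuous_on_compose2[OF V(3)]; auto)
  show ?thesis unfolding C2F_def using A B C by blast
qed

definition Sq :: "state \<Rightarrow> real" where "Sq x = fst (snd x) ^ 2 + snd (snd (snd x)) ^ 2"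

lemma C2F_Sq: "C2F Sq (\<lambda>x h. 2 * fst (snd x) * fst (snd h) + 2 * snd (snd (snd x)) * snd (snd (snd h)))
   (\<lambda>x h k. 2 * fst (snd k) * fst (snd h) + 2 * snd (snd (snd k)) * snd (snd (snd h)))"
proof -
  have A: "(Sq has_derivative (\<lambda>h. 2 * fst (snd x) * fst (snd h) + 2 * snd (snd (snd x)) * snd (snd (snd h)))) (at x)" for x
    unfolding Sq_def by (auto intro!: derivative_eq_intros simp: fun_eq_iff)
  have B: "((\<lambda>x. 2 * fst (snd x) * fst (snd h) + 2 * snd (snd (snd x)) * snd (snd (snd h))) has_derivative
     (\<lambda>k. 2 * fst (snd k) * fst (snd h) + 2 * snd (snd (snd k)) * snd (snd (snd h)))) (at x)" for x h :: state
    by (auto intro!: derivative_eq_intros simp: fun_eq_iff)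
  show ?thesis unfolding C2F_def using A B by (auto intro!: continuous_intros)
qed



lemma C2F_test:
  fixes \<alpha> \<gamma> T Tinf :: real
  assumes V: "\<And>s. DERIV V s :> deriv V s" "\<And>s. DERIV (deriv V) s :> V2 s" "continuous_on UNIV V2"
    and P: "\<And>s. DERIV P s :> P1 s" "\<And>s. DERIV P1 s :> P2 s" "continuous_on UNIV P2"
    and Q: "\<And>s. DERIV Q s :> Q1 s" "\<And>s. DERIV Q1 s :> Q2 s" "continuous_on UNIV Q2"
  defines "f \<equiv> (\<lambda>x. P (Ham \<alpha> V x) * Q (Sq x))"
  shows "C2_R4 f"
    and "gen \<alpha> \<gamma> T Tinf V f x = (case x of (a, b, c, d) \<Rightarrow>
       Q (Sq x) * (P1 (Ham \<alpha> V x) * (\<gamma> * (T + Tinf - a^2)) + P2 (Ham \<alpha> V x) * (\<gamma> * (T * a^2 + Tinf * c^2)))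
       + 2 * P (Ham \<alpha> V x) * Q1 (Sq x) * (a * b + c * d))"
proof -
  note H = C2F_comp[OF C2F_Ham[OF V, of \<alpha>] P]
  note S = C2F_comp[OF C2F_Sq Q]
  note F = C2F_mult[OF H S]
  note F' = F[folded f_def]
  show "C2_R4 f" by (rule C2F_C2[OF F'])
  show "gen \<alpha> \<gamma> T Tinf V f x = (case x of (a, b, c, d) \<Rightarrow>
       Q (Sq x) * (P1 (Ham \<alpha> V x) * (\<gamma> * (T + Tinf - a^2)) + P2 (Ham \<alpha> V x) * (\<gamma> * (T * a^2 + Tinf * c^2)))
       + 2 * P (Ham \<alpha> V x) * Q1 (Sq x) * (a * b + c * d))"
    unfolding gen_def C2F_pd[OF F'] C2F_pd2[OF F']
    by (cases x) (simp add: e_p0_def e_q0_def e_p1_def e_q1_def dH_def d2H_def algebra_simps power2_eq_square)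
qed



lemma rho_ge0: "0 \<le> rho s"
proof -
  have "1 - 10* s ^ 3 + 15* s ^ 4 - 6* s ^ 5 = (1 - s)^3 * (1 + 3 * s + 6 * s^2)" by (simp add: algebra_simps power2_eq_square power3_eq_cube power_numeral_reduce)
  moreover have "s < 1 \<Longrightarrow> 0 < s \<Longrightarrow> 0 \<le> (1 - s)^3 * (1 + 3 * s + 6 * s^2)" by (intro mult_nonneg_nonneg) auto
  ultimately show ?thesis unfolding rho_def by auto
qed

lemma rho_le1: "rho s \<le> 1"
proof -
  have "0 < s \<Longrightarrow> 0 \<le> 10* s ^ 3 - 15* s ^ 4 + 6* s ^ 5"
  proof -
    assume s: "0 < s"
    have "10* s ^ 3 - 15* s ^ 4 + 6* s ^ 5 = s^3 * (6*(s - 5/4)^2 + 10 - 75/8)" by (simp add: algebra_simps power2_eq_square power3_eq_cube power_numeral_reduce)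
    moreover have "0 \<le> s^3 * (6*(s - 5/4)^2 + 10 - 75/8)" using s by (intro mult_nonneg_nonneg) auto
    ultimately show ?thesis by simp
  qed
  then show ?thesis unfolding rho_def by auto
qed

lemma rho_one: "s \<le> 0 \<Longrightarrow> rho s = 1" and rho_zero: "1 \<le> s \<Longrightarrow> rho s = 0"
  and rho1_zero: "s \<le> 0 \<or> 1 \<le> s \<Longrightarrow> rho1 s = 0" and rho2_zero: "s \<le> 0 \<or> 1 \<le> s \<Longrightarrow> rho2 s = 0"
  by (auto simp: rho_def rho1_def rho2_def)

lemma pow_le1: "0 \<le> (s::real) \<Longrightarrow> s \<le> 1 \<Longrightarrow> s ^ n \<le> 1"
  by (simp add: power_le_one)

lemma rho1_bound: "\<bar>rho1 s\<bar> \<le> 360"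
proof -
  have "0 < s \<Longrightarrow> s < 1 \<Longrightarrow> \<bar>-30* s ^ 2 + 60* s ^ 3 - 30* s ^ 4\<bar> \<le> 360"
    using pow_le1[of s 2] pow_le1[of s 3] pow_le1[of s 4] zero_le_power[of s 2] zero_le_power[of s 3] zero_le_power[of s 4]
    by (simp add: abs_le_iff; linarith)
  then show ?thesis by (auto simp: rho1_def)
qed

lemma rho2_bound: "\<bar>rho2 s\<bar> \<le> 360"
proof -
  have "0 < s \<Longrightarrow> s < 1 \<Longrightarrow> \<bar>-60* s + 180* s ^ 2 - 120* s ^ 3\<bar> \<le> 360"
    using pow_le1[of s 2] pow_le1[of s 3] zero_le_power[of s 2] zero_le_power[of s 3]
    by (simp add: abs_le_iff; linarith)
  then show ?thesis by (auto simp: rho2_def)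
qed

lemma C2_real_facts:
  assumes "C2_real V"
  shows "\<And>s. DERIV V s :> deriv V s" "\<And>s. DERIV (deriv V) s :> deriv (deriv V) s"
    "continuous_on UNIV (deriv (deriv V))" "continuous_on UNIV V"
proof -
  show 1: "\<And>s. DERIV V s :> deriv V s" using assms unfolding C2_real_def
    by (simp add: DERIV_deriv_iff_real_differentiable)
  show "\<And>s. DERIV (deriv V) s :> deriv (deriv V) s" using assms unfolding C2_real_def
    by (simp add: DERIV_deriv_iff_real_differentiable)
  show "continuous_on UNIV (deriv (deriv V))" using assms unfolding C2_real_def by simp
  show "continuous_on UNIV V" by (rule DERIV_cont_on[OF 1])
qed

lemma pow_neg_le1: "1 < (y::real) \<Longrightarrow> e \<le> 0 \<Longrightarrow> y powr e \<le> 1"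
  using powr_mono[of e 0 y] by simp

lemma V1_lower_far:
  assumes "admissible_V1 k V1"
  shows "\<exists>K M. \<forall>x. \<bar>x\<bar> > K \<longrightarrow> V1 x \<ge> - M"
proof -
  obtain c B where cB: "\<And>x. \<bar>x\<bar> > 1 \<Longrightarrow> \<bar>V1 x - (if k = 0 then c else \<bar>x\<bar> powr (2*k) / (2*k))\<bar> \<le> B * \<bar>x\<bar> powr (2*k - 1)"
  proof -
    obtain c B where h: "\<forall>x. \<bar>x\<bar> > 1 \<longrightarrow> (\<forall>m::nat. m \<le> 2 \<longrightarrow>
       \<bar>(deriv ^^ m) (\<lambda>x. V1 x - (if k = 0 then c else \<bar>x\<bar> powr (2*k) / (2*k))) x\<bar> \<le> B * \<bar>x\<bar> powr (2*k - 1 - real m))"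
      using assms unfolding admissible_V1_def Let_def by blast
    have "\<bar>V1 x - (if k = 0 then c else \<bar>x\<bar> powr (2*k) / (2*k))\<bar> \<le> B * \<bar>x\<bar> powr (2*k - 1)" if "\<bar>x\<bar> > 1" for x
      using h[rule_format, OF that, of 0] by simp
    then show ?thesis using that by blast
  qed
  have low: "V1 x \<ge> (if k = 0 then c else \<bar>x\<bar> powr (2*k) / (2*k)) - \<bar>B\<bar> * \<bar>x\<bar> powr (2*k - 1)" if "\<bar>x\<bar> > 1" for x
  proof -
    have "B * \<bar>x\<bar> powr (2*k - 1) \<le> \<bar>B\<bar> * \<bar>x\<bar> powr (2*k - 1)" by (intro mult_right_mono) auto
    then show ?thesis using cB[OF that] by (simp add: abs_le_iff)
  qed
  consider "k = 0" | "k < 0" | "k > 0" by linarith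
  then show ?thesis
  proof cases
    case 1
    have "V1 x \<ge> - (\<bar>c\<bar> + \<bar>B\<bar>)" if "\<bar>x\<bar> > 1" for x
    proof -
      have "\<bar>x\<bar> powr (2*k - 1) \<le> 1" using 1 that by (intro pow_neg_le1) auto
      then have "\<bar>B\<bar> * \<bar>x\<bar> powr (2*k - 1) \<le> \<bar>B\<bar>" by (simp add: mult_left_le)
      then show ?thesis using low[OF that] 1 by simp
    qed
    then show ?thesis by blast
  next
    case 2
    have "V1 x \<ge> 1 / (2*k) - \<bar>B\<bar>" if "\<bar>x\<bar> > 1" for x
    proof -
      have "\<bar>x\<bar> powr (2*k - 1) \<le> 1" using 2 that by (intro pow_neg_le1) auto
      then have b: "\<bar>B\<bar> * \<bar>x\<bar> powr (2*k - 1) \<le> \<bar>B\<bar>" by (simp add: mult_left_le)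
      have "\<bar>x\<bar> powr (2*k) \<le> 1" using 2 that by (intro pow_neg_le1) auto
      then have "1 / (2*k) \<le> \<bar>x\<bar> powr (2*k) / (2*k)" using 2 by (intro divide_right_mono_neg) auto
      then show ?thesis using low[OF that] 2 b by simp
    qed
    then show ?thesis by (intro exI[of _ 1] exI[of _ "-(1/(2*k) - \<bar>B\<bar>)"]) auto
  next
    case 3
    have "V1 x \<ge> 0" if "\<bar>x\<bar> > max 1 (2*k*\<bar>B\<bar>)" for x
    proof -
      have x1: "\<bar>x\<bar> > 1" using that by simp
      define p where "p = \<bar>x\<bar> powr (2*k - 1)"
      have p0: "p \<ge> 0" unfolding p_def by simp
      have "\<bar>x\<bar> powr (2*k) = \<bar>x\<bar> powr 1 * \<bar>x\<bar> powr (2*k - 1)" using powr_add[of "\<bar>x\<bar>" 1 "2*k-1"] by simp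
      also have "\<dots> = \<bar>x\<bar> * p" unfolding p_def using x1 by simp
      finally have e: "\<bar>x\<bar> powr (2*k) / (2*k) - \<bar>B\<bar> * p = p * (\<bar>x\<bar> / (2*k) - \<bar>B\<bar>)"
        by (simp add: algebra_simps)
      have "\<bar>x\<bar> / (2*k) \<ge> \<bar>B\<bar>" using that 3 by (simp add: le_divide_eq mult.commute)
      then have "p * (\<bar>x\<bar> / (2*k) - \<bar>B\<bar>) \<ge> 0" using p0 by simp
      then show ?thesis using low[OF x1] 3 e unfolding p_def by simp
    qed
    then show ?thesis by (intro exI[of _ "max 1 (2*k*\<bar>B\<bar>)"] exI[of _ 0]) auto
  qed
qed

lemma V1_lower:
  assumes "admissible_V1 k V1"
  shows "\<exists>M\<ge>0. \<forall>x. V1 x \<ge> - M"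
proof -
  obtain K M where KM: "\<And>x. \<bar>x\<bar> > K \<Longrightarrow> V1 x \<ge> - M" using V1_lower_far[OF assms] by blast
  have cont: "continuous_on UNIV V1" using C2_real_facts(4) assms unfolding admissible_V1_def by blast
  have cc: "continuous_on {-\<bar>K\<bar>..\<bar>K\<bar>} V1" by (rule continuous_on_subset[OF cont]) simp
  have ne: "{-\<bar>K\<bar>..\<bar>K\<bar>} \<noteq> {}" by simp
  obtain z where z: "\<And>y. y \<in> {-\<bar>K\<bar>..\<bar>K\<bar>} \<Longrightarrow> V1 z \<le> V1 y"
    using continuous_attains_inf[OF compact_Icc ne cc] by blast
  have "V1 x \<ge> - (\<bar>M\<bar> + \<bar>V1 z\<bar>)" for x
  proof (cases "\<bar>x\<bar> > K")
    case True then show ?thesis using KM[OF True] by linarith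
  next
    case False then have "x \<in> {-\<bar>K\<bar>..\<bar>K\<bar>}" by auto
    then show ?thesis using z[of x] by linarith
  qed
  then show ?thesis by (intro exI[of _ "\<bar>M\<bar> + \<bar>V1 z\<bar>"]) auto
qed



lemma L_low:
  fixes e e0 b1 \<gamma> T Tinf a c :: real
  assumes "b1 > 0" "\<gamma> > 0" "T > 0" "Tinf > 0" "b1 * T \<ge> 1" "e \<ge> e0" "e0 > 0"
  shows "(e * b1) * (\<gamma> * (T + Tinf - a^2)) + (e * b1^2) * (\<gamma> * (T * a^2 + Tinf * c^2)) \<ge> e0 * b1 * \<gamma> * (T + Tinf)"
proof -
  have eq: "(e * b1) * (\<gamma> * (T + Tinf - a^2)) + (e * b1^2) * (\<gamma> * (T * a^2 + Tinf * c^2))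
     = e * b1 * \<gamma> * ((T + Tinf) + (b1 * T - 1) * a^2 + b1 * Tinf * c^2)"
    by (simp add: algebra_simps power2_eq_square)
  have "(T + Tinf) \<le> (T + Tinf) + (b1 * T - 1) * a^2 + b1 * Tinf * c^2"
    using assms by (simp add: add_nonneg_nonneg)
  moreover have "e0 * b1 * \<gamma> \<le> e * b1 * \<gamma>" using assms by simp
  ultimately have "e0 * b1 * \<gamma> * (T + Tinf) \<le> e * b1 * \<gamma> * ((T + Tinf) + (b1 * T - 1) * a^2 + b1 * Tinf * c^2)"
    using assms by (intro mult_mono) auto
  then show ?thesis using eq by simp
qed

lemma amgm_bound:
  fixes a q R :: real
  assumes "R > 0"
  shows "\<bar>a * q\<bar> \<le> (R * a^2 + q^2 / R) / 2"
proof -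
  have "0 \<le> (R * \<bar>a\<bar> - \<bar>q\<bar>)^2 / R" using assms by simp
  also have "(R * \<bar>a\<bar> - \<bar>q\<bar>)^2 / R = R * a^2 + q^2 / R - 2 * \<bar>a * q\<bar>"
    using assms by (simp add: field_simps power2_eq_square abs_mult)
  finally show ?thesis by simp
qed

lemma one_plus_exp:
  fixes h d :: real
  assumes "d > 0" "h \<ge> 0"
  shows "1 + h \<le> (1 + 1/d) * exp (d * h)"
proof -
  have "1 + d * h \<le> exp (d * h)" by (rule exp_ge_add_one_self)
  moreover have "1 + h \<le> (1 + 1/d) * (1 + d * h)"
    using assms by (simp add: field_simps)
  moreover have "0 \<le> 1 + 1/d" using assms by simp
  ultimately show ?thesis by (meson mult_left_mono order_trans)
qed

definition Phi :: "real \<Rightarrow> real \<Rightarrow> real \<Rightarrow> real" where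
  "Phi b n h = exp (b * h) * rho (h - n)"
definition Phi1 :: "real \<Rightarrow> real \<Rightarrow> real \<Rightarrow> real" where
  "Phi1 b n h = exp (b * h) * (b * rho (h - n) + rho1 (h - n))"
definition Phi2 :: "real \<Rightarrow> real \<Rightarrow> real \<Rightarrow> real" where
  "Phi2 b n h = exp (b * h) * (b^2 * rho (h - n) + 2 * b * rho1 (h - n) + rho2 (h - n))"
definition Psi :: "real \<Rightarrow> real \<Rightarrow> real" where
  "Psi r s = rho (s / r - 1)"
definition Psi1 :: "real \<Rightarrow> real \<Rightarrow> real" where
  "Psi1 r s = rho1 (s / r - 1) / r"
definition Psi2 :: "real \<Rightarrow> real \<Rightarrow> real" where
  "Psi2 r s = rho2 (s / r - 1) / r / r"

lemma rho_chain: "(g has_real_derivative g') (at x within S) \<Longrightarrow> ((\<lambda>x. rho (g x)) has_real_derivative rho1 (g x) * g') (at x within S)"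
  by (rule DERIV_chain'[OF _ rho_deriv])
lemma rho1_chain: "(g has_real_derivative g') (at x within S) \<Longrightarrow> ((\<lambda>x. rho1 (g x)) has_real_derivative rho2 (g x) * g') (at x within S)"
  by (rule DERIV_chain'[OF _ rho1_deriv])

lemma Phi_deriv: "DERIV (Phi b n) s :> Phi1 b n s" "DERIV (Phi1 b n) s :> Phi2 b n s"
  "continuous_on UNIV (Phi2 b n)"
proof -
  show "DERIV (Phi b n) s :> Phi1 b n s" unfolding Phi_def[abs_def] Phi1_def
    by (rule derivative_eq_intros rho_chain refl | simp add: algebra_simps)+
  show "DERIV (Phi1 b n) s :> Phi2 b n s" unfolding Phi1_def[abs_def] Phi2_def
    by (rule derivative_eq_intros rho_chain rho1_chain refl | simp add: algebra_simps power2_eq_square)+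
  have c0: "continuous_on UNIV rho" "continuous_on UNIV rho1" "continuous_on UNIV rho2"
    using DERIV_cont_on[OF rho_deriv] DERIV_cont_on[OF rho1_deriv] rho2_cont by auto
  have l: "continuous_on UNIV (\<lambda>h::real. h - n)" by (intro continuous_intros)
  have c1: "continuous_on UNIV (\<lambda>h. rho (h - n))" "continuous_on UNIV (\<lambda>h. rho1 (h - n))"
     "continuous_on UNIV (\<lambda>h. rho2 (h - n))"
    using continuous_on_compose2[OF c0(1) l] continuous_on_compose2[OF c0(2) l] continuous_on_compose2[OF c0(3) l] by auto
  show "continuous_on UNIV (Phi2 b n)" unfolding Phi2_def[abs_def]
    using c1 by (intro continuous_intros) auto
qed

lemma Psi_deriv: "DERIV (Psi r) s :> Psi1 r s" "DERIV (Psi1 r) s :> Psi2 r s"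
  "continuous_on UNIV (Psi2 r)"
proof -
  have d: "((\<lambda>s. s / r - 1) has_real_derivative 1 / r) (at s)" by (cases "r = 0") (auto intro!: derivative_eq_intros)
  show "DERIV (Psi r) s :> Psi1 r s" unfolding Psi_def[abs_def] Psi1_def
    using rho_chain[OF d] by simp
  show "DERIV (Psi1 r) s :> Psi2 r s" unfolding Psi1_def[abs_def] Psi2_def
    using DERIV_cdivide[OF rho1_chain[OF d], of r] by simp
  have l: "continuous_on UNIV (\<lambda>s::real. s / r - 1)" by (cases "r = 0") (auto intro!: continuous_intros)
  have eq: "Psi2 r = (\<lambda>s. rho2 (s / r - 1) * (1 / r / r))" by (auto simp: Psi2_def fun_eq_iff)
  show "continuous_on UNIV (Psi2 r)" unfolding eq
    using continuous_on_compose2[OF rho2_cont l] by (intro continuous_intros) auto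
qed



lemma norm_state: "norm (x::state) \<le> 4 + (fst x)^2 + (fst (snd x))^2 + (fst (snd (snd x)))^2 + (snd (snd (snd x)))^2"
proof -
  obtain a q c u where x: "x = (a, q, c, u)" by (cases x) auto
  have "norm (c, u) \<le> \<bar>c\<bar> + \<bar>u\<bar>" using norm_Pair_le[of c u] by simp
  moreover have "norm (q, c, u) \<le> \<bar>q\<bar> + norm (c, u)" using norm_Pair_le[of q "(c, u)"] by simp
  moreover have "norm (a, q, c, u) \<le> \<bar>a\<bar> + norm (q, c, u)" using norm_Pair_le[of a "(q, c, u)"] by simp
  ultimately have "norm x \<le> \<bar>a\<bar> + (\<bar>q\<bar> + (\<bar>c\<bar> + \<bar>u\<bar>))" unfolding x by linarith
  moreover have "\<bar>t\<bar> \<le> 1 + t^2" for t :: real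
  proof -
    have "0 \<le> (\<bar>t\<bar> - 1)^2" by simp
    then have "2 * \<bar>t\<bar> \<le> \<bar>t\<bar>^2 + 1" by (simp add: power2_diff)
    then show ?thesis by simp
  qed
  ultimately show ?thesis unfolding x by (simp only: fst_conv snd_conv) (smt (verit))
qed

lemma Ham_lower:
  assumes M: "\<And>y. V1 y \<ge> - M" and \<alpha>: "\<alpha> \<ge> 0"
  shows "Ham \<alpha> V1 x \<ge> ((fst x)^2 + (fst (snd (snd x)))^2) / 2 - 2 * M"
proof -
  have "0 \<le> \<alpha> / 2 * (fst (snd x) - snd (snd (snd x)))^2" using \<alpha> by simp
  then show ?thesis unfolding Ham_eq using M[of "fst (snd x)"] M[of "snd (snd (snd x))"] by simp
qed

lemma Ham_lower2:
  assumes M: "\<And>y. V1 y \<ge> - M" and \<alpha>: "\<alpha> \<ge> 0"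
  shows "(fst x)^2 + (fst (snd (snd x)))^2 \<le> 2 * Ham \<alpha> V1 x + 4 * M"
proof -
  have "((fst x)^2 + (fst (snd (snd x)))^2) / 2 - 2 * M \<le> Ham \<alpha> V1 x"
    by (rule Ham_lower) (use M \<alpha> in auto)
  then show ?thesis by (simp add: field_simps)
qed

lemma test_fun_f:
  fixes b n r \<alpha> \<gamma> T Tinf :: real
  assumes V: "admissible_V1 k V1" and M: "\<And>y. V1 y \<ge> - M" and \<alpha>: "\<alpha> \<ge> 0" and r: "r > 0"
  defines "f \<equiv> (\<lambda>x. Phi b n (Ham \<alpha> V1 x) * Psi r (Sq x))"
  shows "test_fun f"
    and "gen \<alpha> \<gamma> T Tinf V1 f x = (case x of (a, q, c, u) \<Rightarrow>
       Psi r (Sq x) * (Phi1 b n (Ham \<alpha> V1 x) * (\<gamma> * (T + Tinf - a^2)) + Phi2 b n (Ham \<alpha> V1 x) * (\<gamma> * (T * a^2 + Tinf * c^2)))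
       + 2 * Phi b n (Ham \<alpha> V1 x) * Psi1 r (Sq x) * (a * q + c * u))"
proof -
  have C2: "C2_real V1" using V unfolding admissible_V1_def by blast
  note CT = C2F_test[OF C2_real_facts(1-3)[OF C2] Phi_deriv Psi_deriv]
  show "gen \<alpha> \<gamma> T Tinf V1 f x = (case x of (a, q, c, u) \<Rightarrow>
       Psi r (Sq x) * (Phi1 b n (Ham \<alpha> V1 x) * (\<gamma> * (T + Tinf - a^2)) + Phi2 b n (Ham \<alpha> V1 x) * (\<gamma> * (T * a^2 + Tinf * c^2)))
       + 2 * Phi b n (Ham \<alpha> V1 x) * Psi1 r (Sq x) * (a * q + c * u))"
    unfolding f_def by (rule CT(2))
  have sub: "{x. f x \<noteq> 0} \<subseteq> {x. Ham \<alpha> V1 x \<le> n + 1 \<and> Sq x \<le> 2 * r}"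
  proof
    fix x assume "x \<in> {x. f x \<noteq> 0}"
    then have "rho (Ham \<alpha> V1 x - n) \<noteq> 0" "rho (Sq x / r - 1) \<noteq> 0"
      unfolding f_def Phi_def Psi_def by auto
    then have "Ham \<alpha> V1 x - n < 1" "Sq x / r - 1 < 1" using rho_zero by (auto simp: not_le[symmetric])
    then show "x \<in> {x. Ham \<alpha> V1 x \<le> n + 1 \<and> Sq x \<le> 2 * r}" using r by (auto simp: divide_less_eq)
  qed
  have bnd: "bounded {x. Ham \<alpha> V1 x \<le> n + 1 \<and> Sq x \<le> 2 * r}"
    unfolding bounded_iff
  proof (intro exI ballI)
    fix x assume "x \<in> {x. Ham \<alpha> V1 x \<le> n + 1 \<and> Sq x \<le> 2 * r}"
    then have h1: "Ham \<alpha> V1 x \<le> n + 1" "Sq x \<le> 2 * r" by auto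
    have h2: "(fst x)^2 + (fst (snd (snd x)))^2 \<le> 2 * Ham \<alpha> V1 x + 4 * M"
      by (rule Ham_lower2) (use M \<alpha> in auto)
    have "(fst x)^2 + (fst (snd (snd x)))^2 \<le> 2 * n + 2 + 4 * M" using h1 h2 by linarith
    then show "norm x \<le> 4 + (2 * n + 2 + 4 * M) + 2 * r"
      using norm_state[of x] h1(2) unfolding Sq_def by linarith
  qed
  show "test_fun f" unfolding test_fun_def using CT(1)[of b n \<alpha> r, folded f_def] bounded_subset[OF bnd sub] by simp
qed



lemma Phi_bounds:
  assumes "b > 0"
  shows "\<bar>Phi1 b n h\<bar> \<le> exp (b * h) * (b + 360)"
    and "\<bar>Phi2 b n h\<bar> \<le> exp (b * h) * (b^2 + 2 * b * 360 + 360)"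
    and "h \<le> n \<Longrightarrow> Phi1 b n h = exp (b * h) * b"
    and "h \<le> n \<Longrightarrow> Phi2 b n h = exp (b * h) * b^2"
    and "\<bar>Phi b n h\<bar> \<le> exp (b * h)"
    and "n + 1 \<le> h \<Longrightarrow> Phi b n h = 0"
proof -
  have r0: "0 \<le> rho (h - n)" "rho (h - n) \<le> 1" using rho_ge0 rho_le1 by auto
  have r1: "\<bar>rho1 (h - n)\<bar> \<le> 360" "\<bar>rho2 (h - n)\<bar> \<le> 360" using rho1_bound rho2_bound by auto
  have "\<bar>b * rho (h - n) + rho1 (h - n)\<bar> \<le> b + 360"
  proof -
    have "\<bar>b * rho (h - n)\<bar> \<le> b" using r0 assms by (simp add: abs_mult mult_left_le)
    then show ?thesis using r1 by (smt (verit))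
  qed
  then show "\<bar>Phi1 b n h\<bar> \<le> exp (b * h) * (b + 360)" unfolding Phi1_def abs_mult by (simp add: mult_left_mono)
  have "\<bar>b^2 * rho (h - n) + 2 * b * rho1 (h - n) + rho2 (h - n)\<bar> \<le> b^2 + 2 * b * 360 + 360"
  proof -
    have "\<bar>b^2 * rho (h - n)\<bar> \<le> b^2" using r0 assms by (simp add: abs_mult mult_left_le)
    moreover have "\<bar>2 * b * rho1 (h - n)\<bar> \<le> 2 * b * 360" using r1 assms by (simp add: abs_mult)
    ultimately show ?thesis using r1 by (smt (verit))
  qed
  then show "\<bar>Phi2 b n h\<bar> \<le> exp (b * h) * (b^2 + 2 * b * 360 + 360)" unfolding Phi2_def abs_mult by (simp add: mult_left_mono)
  show "h \<le> n \<Longrightarrow> Phi1 b n h = exp (b * h) * b" unfolding Phi1_def by (simp add: rho_one rho1_zero)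
  show "h \<le> n \<Longrightarrow> Phi2 b n h = exp (b * h) * b^2" unfolding Phi2_def by (simp add: rho_one rho1_zero rho2_zero)
  show "\<bar>Phi b n h\<bar> \<le> exp (b * h)" unfolding Phi_def abs_mult using r0 by (simp add: mult_left_le)
  show "n + 1 \<le> h \<Longrightarrow> Phi b n h = 0" unfolding Phi_def by (simp add: rho_zero)
qed

lemma Psi_bounds:
  assumes "r > 0"
  shows "0 \<le> Psi r s" "Psi r s \<le> 1" "s \<le> r \<Longrightarrow> Psi r s = 1"
    "\<bar>Psi1 r s\<bar> \<le> 360 / r" "2 * r \<le> s \<Longrightarrow> Psi1 r s = 0"
proof -
  show "0 \<le> Psi r s" "Psi r s \<le> 1" unfolding Psi_def using rho_ge0 rho_le1 by auto
  show "s \<le> r \<Longrightarrow> Psi r s = 1" unfolding Psi_def using assms by (intro rho_one) (simp add: divide_le_eq)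
  show "\<bar>Psi1 r s\<bar> \<le> 360 / r" unfolding Psi1_def using assms rho1_bound by (simp add: divide_right_mono)
  show "2 * r \<le> s \<Longrightarrow> Psi1 r s = 0" unfolding Psi1_def using assms by (simp add: rho1_zero le_divide_eq)
qed

lemma E_bound:
  fixes a q c u R P K0 :: real
  assumes R: "R > 0" and Y: "a^2 + c^2 \<le> 2 * P" and Q: "q^2 + u^2 \<le> 2 * R^2"
  shows "\<bar>a * q + c * u\<bar> \<le> R * (P + 1)"
proof -
  have "\<bar>a * q + c * u\<bar> \<le> \<bar>a * q\<bar> + \<bar>c * u\<bar>" by (rule abs_triangle_ineq)
  also have "\<dots> \<le> (R * a^2 + q^2 / R) / 2 + (R * c^2 + u^2 / R) / 2"
    using amgm_bound[OF R, of a q] amgm_bound[OF R, of c u] by linarith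
  also have "\<dots> = (R * (a^2 + c^2) + (q^2 + u^2) / R) / 2" by (simp add: algebra_simps add_divide_distrib)
  also have "\<dots> \<le> (R * (2 * P) + (2 * R^2) / R) / 2"
    using R Y Q by (intro divide_right_mono add_mono mult_left_mono) auto
  also have "\<dots> = R * (P + 1)" using R by (simp add: power2_eq_square algebra_simps)
  finally show ?thesis .
qed



lemma L_high:
  fixes b1 b2 \<beta> n M H \<gamma> T Tinf a c P1v P2v :: real
  assumes pos: "b1 > 0" "b1 < b2" "b2 < \<beta>" "n \<ge> 0" "M \<ge> 0" "\<gamma> > 0" "T > 0" "Tinf > 0"
    and H: "H > n" and Y: "a^2 + c^2 \<le> 2 * H + 4 * M"
    and P1: "\<bar>P1v\<bar> \<le> exp (b1 * H) * (b1 + 360)"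
    and P2: "\<bar>P2v\<bar> \<le> exp (b1 * H) * (b1^2 + 2 * b1 * 360 + 360)"
  shows "\<bar>P1v * (\<gamma> * (T + Tinf - a^2)) + P2v * (\<gamma> * (T * a^2 + Tinf * c^2))\<bar>
     \<le> (2 * (\<gamma> * ((b1 + 360) + (b1^2 + 2 * b1 * 360 + 360)) * (T + Tinf + 1)) * (1 + 4 * M) * (1 + 1 / (b2 - b1)))
        * exp ((b2 - \<beta>) * n) * exp (\<beta> * H)"
proof -
  define e where "e = exp (b1 * H)"
  define Yv where "Yv = a^2 + c^2"
  define Z where "Z = \<gamma> * ((b1 + 360) + (b1^2 + 2 * b1 * 360 + 360)) * (T + Tinf + 1)"
  have e0: "e > 0" unfolding e_def by simp
  have Y0: "Yv \<ge> 0" unfolding Yv_def by simp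
  have Hp: "H \<ge> 0" using H pos by simp
  have A1: "\<bar>\<gamma> * (T + Tinf - a^2)\<bar> \<le> \<gamma> * (T + Tinf + 1) * (1 + Yv)"
  proof -
    have "\<bar>T + Tinf - a^2\<bar> \<le> T + Tinf + a^2" using pos by (simp add: abs_le_iff)
    also have "\<dots> \<le> (T + Tinf + 1) * (1 + Yv)" unfolding Yv_def using pos
      by (simp add: algebra_simps; smt (verit) mult_nonneg_nonneg zero_le_power2)
    finally show ?thesis using pos by (simp add: abs_mult)
  qed
  have A2: "\<bar>\<gamma> * (T * a^2 + Tinf * c^2)\<bar> \<le> \<gamma> * (T + Tinf + 1) * (1 + Yv)"
  proof -
    have "\<bar>T * a^2 + Tinf * c^2\<bar> = T * a^2 + Tinf * c^2" using pos by simp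
    also have "\<dots> \<le> (T + Tinf + 1) * (1 + Yv)" unfolding Yv_def using pos
      by (simp add: algebra_simps; smt (verit) mult_nonneg_nonneg zero_le_power2)
    finally show ?thesis using pos by (simp add: abs_mult)
  qed
  have "\<bar>P1v * (\<gamma> * (T + Tinf - a^2)) + P2v * (\<gamma> * (T * a^2 + Tinf * c^2))\<bar>
     \<le> \<bar>P1v\<bar> * \<bar>\<gamma> * (T + Tinf - a^2)\<bar> + \<bar>P2v\<bar> * \<bar>\<gamma> * (T * a^2 + Tinf * c^2)\<bar>"
    by (metis abs_mult abs_triangle_ineq)
  also have "\<dots> \<le> (e * (b1 + 360)) * (\<gamma> * (T + Tinf + 1) * (1 + Yv)) + (e * (b1^2 + 2 * b1 * 360 + 360)) * (\<gamma> * (T + Tinf + 1) * (1 + Yv))"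
    unfolding e_def using P1 P2 A1 A2 by (intro add_mono mult_mono) auto
  also have "\<dots> = e * Z * (1 + Yv)" unfolding Z_def by (simp add: algebra_simps)
  also have "\<dots> \<le> e * Z * (2 * (1 + 4 * M) * (1 + H))"
  proof -
    have "1 + Yv \<le> 2 * (1 + 4 * M) * (1 + H)" using Y Hp pos unfolding Yv_def
      by (simp add: algebra_simps; smt (verit) mult_nonneg_nonneg)
    moreover have "0 \<le> e * Z" unfolding Z_def using e0 pos by simp
    ultimately show ?thesis by (rule mult_left_mono)
  qed
  also have "\<dots> = 2 * Z * (1 + 4 * M) * ((1 + H) * e)" by (simp add: algebra_simps)
  also have "\<dots> \<le> 2 * Z * (1 + 4 * M) * ((1 + 1 / (b2 - b1)) * exp ((b2 - b1) * H) * e)"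
  proof -
    have "1 + H \<le> (1 + 1 / (b2 - b1)) * exp ((b2 - b1) * H)" using pos Hp by (intro one_plus_exp) auto
    then have "(1 + H) * e \<le> (1 + 1 / (b2 - b1)) * exp ((b2 - b1) * H) * e" using e0 by simp
    moreover have "0 \<le> 2 * Z * (1 + 4 * M)" unfolding Z_def using pos by simp
    ultimately show ?thesis by (rule mult_left_mono)
  qed
  also have "\<dots> = 2 * Z * (1 + 4 * M) * (1 + 1 / (b2 - b1)) * exp (b2 * H)"
  proof -
    have ee: "exp ((b2 - b1) * H) * e = exp (b2 * H)" unfolding e_def by (simp add: exp_add[symmetric] algebra_simps)
    show ?thesis using ee by (metis mult.assoc)
  qed
  also have "\<dots> \<le> 2 * Z * (1 + 4 * M) * (1 + 1 / (b2 - b1)) * (exp ((b2 - \<beta>) * n) * exp (\<beta> * H))"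
  proof -
    have "b2 * H \<le> (b2 - \<beta>) * n + \<beta> * H"
    proof -
      have "(\<beta> - b2) * n \<le> (\<beta> - b2) * H" using pos H by (intro mult_left_mono) auto
      then show ?thesis by (simp add: algebra_simps)
    qed
    then have "exp (b2 * H) \<le> exp ((b2 - \<beta>) * n) * exp (\<beta> * H)" by (simp add: mult_exp_exp)
    moreover have "0 \<le> 2 * Z * (1 + 4 * M) * (1 + 1 / (b2 - b1))" unfolding Z_def using pos by simp
    ultimately show ?thesis by (rule mult_left_mono)
  qed
  finally show ?thesis unfolding Z_def by (simp add: algebra_simps)
qed

lemma pointwise_real:
  fixes a q c u H S b1 b2 \<beta> n r M \<gamma> T Tinf :: real
  assumes pos: "b1 > 0" "b1 < b2" "b2 < \<beta>" "n \<ge> 0" "M \<ge> 0" "\<gamma> > 0" "T > 0" "Tinf > 0" "r > 0" "b1 * T \<ge> 1"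
    and Y: "a^2 + c^2 \<le> 2 * H + 4 * M" and S: "S = q^2 + u^2"
  defines "c0 \<equiv> b1 * \<gamma> * (T + Tinf) * exp (b1 * (- 2 * M))"
    and "W \<equiv> 2 * (\<gamma> * ((b1 + 360) + (b1^2 + 2 * b1 * 360 + 360)) * (T + Tinf + 1)) * (1 + 4 * M) * (1 + 1 / (b2 - b1))"
    and "En \<equiv> 2 * exp (b1 * (n + 1)) * 360 * (n + 2 + 2 * M)"
  shows "Psi r S * (Phi1 b1 n H * (\<gamma> * (T + Tinf - a^2)) + Phi2 b1 n H * (\<gamma> * (T * a^2 + Tinf * c^2)))
      + 2 * Phi b1 n H * Psi1 r S * (a * q + c * u)
    \<ge> c0 - c0 * (if r < S then 1 else 0) - (c0 * exp (- (\<beta> * n)) + W * exp ((b2 - \<beta>) * n)) * exp (\<beta> * H) - En / sqrt r"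
proof -
  define R where "R = sqrt r"
  have R0: "R > 0" and Rr: "R^2 = r" unfolding R_def using pos by auto
  define Lv where "Lv = Phi1 b1 n H * (\<gamma> * (T + Tinf - a^2)) + Phi2 b1 n H * (\<gamma> * (T * a^2 + Tinf * c^2))"
  define Ev where "Ev = 2 * Phi b1 n H * Psi1 r S * (a * q + c * u)"
  have c00: "c0 > 0" unfolding c0_def using pos by simp
  have W0: "W \<ge> 0" unfolding W_def using pos by simp
  have En0: "En \<ge> 0" unfolding En_def using pos by simp
  have Hlow: "H \<ge> - 2 * M" using Y by (smt (verit) zero_le_power2)
  have Eb: "\<bar>Ev\<bar> \<le> En / R"
  proof (cases "H < n + 1 \<and> S < 2 * r")
    case False
    then consider "n + 1 \<le> H" | "2 * r \<le> S" by linarith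
    then have "Ev = 0" unfolding Ev_def
      by cases (simp_all add: Phi_bounds(6)[OF pos(1)] Psi_bounds(5)[OF pos(9)])
    then show ?thesis using En0 R0 by simp
  next
    case True
    have Yb0: "a^2 + c^2 \<le> 2 * n + 2 + 4 * M" using Y True by linarith
    have Yb: "a^2 + c^2 \<le> 2 * (n + 1 + 2 * M)" using Yb0 by (simp add: algebra_simps)
    have Qb: "q^2 + u^2 \<le> 2 * R^2" using True S Rr by simp
    have X: "\<bar>a * q + c * u\<bar> \<le> R * (n + 1 + 2 * M + 1)" by (rule E_bound[OF R0 Yb Qb])
    have P: "\<bar>Phi b1 n H\<bar> \<le> exp (b1 * (n + 1))"
      using Phi_bounds(5)[OF pos(1), of n H] True pos by (smt (verit) exp_le_cancel_iff mult_left_mono)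
    have Q: "\<bar>Psi1 r S\<bar> \<le> 360 / r" by (rule Psi_bounds(4)[OF pos(9)])
    have "\<bar>Ev\<bar> = 2 * \<bar>Phi b1 n H\<bar> * \<bar>Psi1 r S\<bar> * \<bar>a * q + c * u\<bar>" unfolding Ev_def by (simp add: abs_mult)
    also have "\<dots> \<le> 2 * exp (b1 * (n + 1)) * (360 / r) * (R * (n + 1 + 2 * M + 1))"
      using P Q X pos(9) by (intro mult_mono) auto
    also have "\<dots> = En / R" unfolding En_def using R0 Rr[symmetric] by (simp add: field_simps power2_eq_square)
    finally show ?thesis .
  qed
  have main: "Psi r S * Lv \<ge> c0 - c0 * (if r < S then 1 else 0) - (c0 * exp (- (\<beta> * n)) + W * exp ((b2 - \<beta>) * n)) * exp (\<beta> * H)"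
  proof (cases "H \<le> n")
    case True
    have "b1 * (- 2 * M) \<le> b1 * H" using Hlow pos by (intro mult_left_mono) auto
    then have e: "exp (b1 * H) \<ge> exp (b1 * (- 2 * M))" by simp
    have "Lv \<ge> exp (b1 * (- 2 * M)) * b1 * \<gamma> * (T + Tinf)"
      unfolding Lv_def Phi_bounds(3,4)[OF pos(1) True] by (rule L_low) (use pos e in auto)
    then have L: "Lv \<ge> c0" unfolding c0_def by (simp add: algebra_simps)
    have "Psi r S * Lv \<ge> c0 - c0 * (if r < S then 1 else 0)"
    proof (cases "r < S")
      case False
      then show ?thesis using Psi_bounds(3)[OF pos(9)] L by simp
    next
      case True
      then show ?thesis using Psi_bounds(1)[OF pos(9), of S] L c00 by simp
    qed
    moreover have "0 \<le> (c0 * exp (- (\<beta> * n)) + W * exp ((b2 - \<beta>) * n)) * exp (\<beta> * H)"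
      using c00 W0 by simp
    ultimately show ?thesis by linarith
  next
    case False
    then have Hn: "H > n" by simp
    have Lb: "\<bar>Lv\<bar> \<le> W * exp ((b2 - \<beta>) * n) * exp (\<beta> * H)"
      unfolding Lv_def W_def by (rule L_high[OF pos(1-8) Hn Y Phi_bounds(1,2)[OF pos(1)]])
    have "\<bar>Psi r S * Lv\<bar> \<le> \<bar>Lv\<bar>"
      using Psi_bounds(1,2)[OF pos(9), of S] by (simp add: abs_mult mult_left_le_one_le)
    moreover have "c0 \<le> c0 * exp (- (\<beta> * n)) * exp (\<beta> * H)"
    proof -
      have "- (\<beta> * n) + \<beta> * H \<ge> 0" using Hn pos by (simp add: algebra_simps mult_left_mono)
      then have "1 \<le> exp (- (\<beta> * n)) * exp (\<beta> * H)" by (simp add: exp_add[symmetric])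
      then show ?thesis using c00 by (simp add: mult.assoc)
    qed
    moreover have "c0 * (if r < S then 1 else 0) \<ge> 0" using c00 by simp
    ultimately show ?thesis using Lb by (simp add: algebra_simps; smt (verit))
  qed
  show ?thesis using main Eb unfolding Lv_def Ev_def R_def by (smt (verit))
qed



lemma choose_n:
  fixes X c0 \<kappa> :: real
  assumes "X \<ge> 0" "c0 > 0" "\<kappa> > 0"
  shows "X * exp (- (\<kappa> * (4 * X / (\<kappa> * c0)))) \<le> c0 / 4"
proof -
  define t where "t = 4 * X / c0"
  have t0: "t \<ge> 0" unfolding t_def using assms by simp
  have k: "\<kappa> * (4 * X / (\<kappa> * c0)) = t" unfolding t_def using assms by (simp add: field_simps)
  have "1 + t \<le> exp t" by (rule exp_ge_add_one_self)
  then have "exp (- t) \<le> 1 / (1 + t)" using t0 by (simp add: exp_minus field_simps)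
  then have "X * exp (- t) \<le> X / (1 + t)" using assms by (simp add: mult_left_mono divide_inverse)
  also have "X / (1 + t) \<le> c0 / 4"
    using assms t0 unfolding t_def by (simp add: field_simps)
  finally show ?thesis using k by simp
qed

lemma Sq_cont: "continuous_on UNIV Sq"
  unfolding Sq_def by (intro continuous_intros)



theorem proposition5p1:
  fixes \<alpha> \<gamma> T Tinf k \<beta> :: real and V1 :: "real \<Rightarrow> real" and \<mu> :: "state measure"
  assumes "\<alpha> > 0" "\<gamma> > 0" "T > 0" "Tinf > 0"
    and "admissible_V1 k V1"
    and "invariant_prob \<alpha> \<gamma> T Tinf V1 \<mu>"
    and "\<beta> > 1 / T"
  shows "(\<integral>\<^sup>+ x. ennreal (exp (\<beta> * Ham \<alpha> V1 x)) \<partial>\<mu>) = \<infinity>"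
proof (rule ccontr)
  assume fin: "(\<integral>\<^sup>+ x. ennreal (exp (\<beta> * Ham \<alpha> V1 x)) \<partial>\<mu>) \<noteq> \<infinity>"
  have ps: "prob_space \<mu>" and s\<mu>: "sets \<mu> = sets borel"
    and inv: "\<And>f. test_fun f \<Longrightarrow> integrable \<mu> (gen \<alpha> \<gamma> T Tinf V1 f) \<and> (\<integral>x. gen \<alpha> \<gamma> T Tinf V1 f x \<partial>\<mu>) = 0"
    using assms(6) unfolding invariant_prob_def by auto
  interpret prob_space \<mu> by (rule ps)
  have sp: "space \<mu> = UNIV" using sets_eq_imp_space_eq[OF s\<mu>] by simp
  have C2: "C2_real V1" using assms(5) unfolding admissible_V1_def by blast
  obtain M where M0: "M \<ge> 0" and M: "\<And>y. V1 y \<ge> - M" using V1_lower[OF assms(5)] by blast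
  have Hc: "continuous_on UNIV (\<lambda>x. Ham \<alpha> V1 x)"
    using C2F_cont[OF C2F_Ham[OF C2_real_facts(1-3)[OF C2]]] by simp
  have meas: "f \<in> borel_measurable \<mu>" if "continuous_on UNIV f" for f :: "state \<Rightarrow> real"
  proof -
    have e: "borel_measurable \<mu> = (borel_measurable borel :: (state \<Rightarrow> real) set)" by (rule measurable_cong_sets[OF s\<mu> refl])
    show ?thesis unfolding e by (rule borel_measurable_continuous_onI[OF that])
  qed
  define g where "g = (\<lambda>x. exp (\<beta> * Ham \<alpha> V1 x))"
  have gm: "g \<in> borel_measurable \<mu>" unfolding g_def by (rule meas) (intro continuous_intros Hc)
  have gint: "integrable \<mu> g"
  proof -
    obtain I0 where "(\<integral>\<^sup>+ x. ennreal (g x) \<partial>\<mu>) = ennreal I0"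
      using fin unfolding g_def by (cases "(\<integral>\<^sup>+ x. ennreal (exp (\<beta> * Ham \<alpha> V1 x)) \<partial>\<mu>)") auto
    then show ?thesis by (intro integrableI_nn_integral_finite[OF gm]) (auto simp: g_def)
  qed
  define I where "I = (\<integral>x. g x \<partial>\<mu>)"
  have I0: "I \<ge> 0" unfolding I_def g_def by (intro integral_nonneg_AE) auto
  define \<delta> where "\<delta> = \<beta> - 1 / T"
  define b1 where "b1 = 1 / T + \<delta> / 3"
  define b2 where "b2 = 1 / T + 2 * \<delta> / 3"
  have \<delta>0: "\<delta> > 0" unfolding \<delta>_def using assms(7) by simp
  have bfacts: "b1 > 0" "b1 < b2" "b2 < \<beta>" "b1 * T \<ge> 1"
    unfolding b1_def b2_def using \<delta>0 assms(3) by (auto simp: \<delta>_def field_simps)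
  define c0 where "c0 = b1 * \<gamma> * (T + Tinf) * exp (b1 * (- 2 * M))"
  define W where "W = 2 * (\<gamma> * ((b1 + 360) + (b1^2 + 2 * b1 * 360 + 360)) * (T + Tinf + 1)) * (1 + 4 * M) * (1 + 1 / (b2 - b1))"
  have c00: "c0 > 0" unfolding c0_def using bfacts assms by simp
  have W0: "W \<ge> 0" unfolding W_def using bfacts assms M0 by simp
  define \<kappa> where "\<kappa> = \<beta> - b2"
  have \<kappa>0: "\<kappa> > 0" unfolding \<kappa>_def using bfacts by simp
  define n where "n = 4 * ((c0 + W) * I) / (\<kappa> * c0)"
  have n0: "n \<ge> 0" unfolding n_def using c00 W0 I0 \<kappa>0 by simp
  define C where "C = c0 * exp (- (\<beta> * n)) + W * exp ((b2 - \<beta>) * n)"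
  have C0: "C \<ge> 0" unfolding C_def using c00 W0 by simp
  have CI: "C * I \<le> c0 / 4"
  proof -
    have "exp (- (\<beta> * n)) \<le> exp (- (\<kappa> * n))" using n0 bfacts \<kappa>0 unfolding \<kappa>_def
      by (simp add: mult_right_mono)
    then have "C \<le> (c0 + W) * exp (- (\<kappa> * n))" unfolding C_def \<kappa>_def using c00
      by (simp add: algebra_simps)
    then have "C * I \<le> ((c0 + W) * exp (- (\<kappa> * n))) * I" using I0 by (rule mult_right_mono)
    also have "\<dots> = ((c0 + W) * I) * exp (- (\<kappa> * n))" by (simp add: algebra_simps)
    also have "\<dots> \<le> c0 / 4" unfolding n_def by (rule choose_n) (use c00 W0 I0 \<kappa>0 in auto)
    finally show ?thesis .
  qed
  define En where "En = 2 * exp (b1 * (n + 1)) * 360 * (n + 2 + 2 * M)"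
  define A where "A = (\<lambda>i::nat. {x. real i < Sq x})"
  have Am: "A i \<in> sets \<mu>" for i
    unfolding s\<mu> A_def by (intro borel_open open_Collect_less continuous_intros Sq_cont)
  have Adec: "decseq A" unfolding A_def decseq_def by auto
  have Aint: "(\<Inter>i. A i) = {}"
  proof (rule equals0I)
    fix x assume x: "x \<in> (\<Inter>i. A i)"
    obtain m where m: "Sq x < real m" using reals_Archimedean2 by blast
    have "x \<in> A m" using x by blast
    then show False using m unfolding A_def by simp
  qed
  have lim: "(\<lambda>i. measure \<mu> (A i)) \<longlonglongrightarrow> 0"
    using finite_Lim_measure_decseq[of A] Am Adec Aint by auto
  obtain N where N: "\<And>i. i \<ge> N \<Longrightarrow> measure \<mu> (A i) < 1 / 4"
    using order_tendstoD(2)[OF lim, of "1/4"] unfolding eventually_sequentially by auto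
  define i where "i = max N (nat \<lceil>(4 * En / c0)^2\<rceil> + 1)"
  define r where "r = real i"
  have r0: "r > 0" unfolding r_def i_def by simp
  have mA: "measure \<mu> (A i) < 1 / 4" using N unfolding i_def by simp
  have Er: "En / sqrt r \<le> c0 / 4"
  proof -
    define t where "t = (4 * En / c0)^2"
    have t0: "t \<ge> 0" unfolding t_def by simp
    have "t \<le> of_int \<lceil>t\<rceil>" by (rule le_of_int_ceiling)
    also have "\<dots> = real (nat \<lceil>t\<rceil>)" using t0 by simp
    also have "\<dots> \<le> r"
    proof -
      have "nat \<lceil>t\<rceil> \<le> i" unfolding i_def t_def by (rule max.coboundedI2) (rule le_add1)
      then show ?thesis unfolding r_def by (rule of_nat_mono)
    qed
    finally have "sqrt t \<le> sqrt r" by (rule real_sqrt_le_mono)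
    then have "\<bar>4 * En / c0\<bar> \<le> sqrt r" unfolding t_def by simp
    then have "4 * En / c0 \<le> sqrt r" by (meson abs_ge_self order_trans)
    then show ?thesis using c00 r0 by (simp add: field_simps)
  qed
  define f where "f = (\<lambda>x. Phi b1 n (Ham \<alpha> V1 x) * Psi r (Sq x))"
  have \<alpha>0: "\<alpha> \<ge> 0" using assms(1) by simp
  have tf: "test_fun f" using test_fun_f(1)[OF assms(5) M \<alpha>0 r0] unfolding f_def by blast
  have gen_eq: "gen \<alpha> \<gamma> T Tinf V1 f x = (case x of (a, q, c, u) \<Rightarrow>
       Psi r (Sq x) * (Phi1 b1 n (Ham \<alpha> V1 x) * (\<gamma> * (T + Tinf - a^2)) + Phi2 b1 n (Ham \<alpha> V1 x) * (\<gamma> * (T * a^2 + Tinf * c^2)))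
       + 2 * Phi b1 n (Ham \<alpha> V1 x) * Psi1 r (Sq x) * (a * q + c * u))" for x
    using test_fun_f(2)[OF assms(5) M \<alpha>0 r0] unfolding f_def by blast
  have ginv: "integrable \<mu> (gen \<alpha> \<gamma> T Tinf V1 f)" "(\<integral>x. gen \<alpha> \<gamma> T Tinf V1 f x \<partial>\<mu>) = 0"
    using inv[OF tf] by auto
  define lb where "lb = (\<lambda>x. c0 - c0 * indicator (A i) x - C * g x - En / sqrt r)"
  have pw: "lb x \<le> gen \<alpha> \<gamma> T Tinf V1 f x" for x
  proof -
    obtain a q c u where x: "x = (a, q, c, u)" by (cases x) auto
    have "(fst x)^2 + (fst (snd (snd x)))^2 \<le> 2 * Ham \<alpha> V1 x + 4 * M"
      by (rule Ham_lower2) (use M \<alpha>0 in auto)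
    then have Y: "a^2 + c^2 \<le> 2 * Ham \<alpha> V1 x + 4 * M" unfolding x by simp
    have S: "Sq x = q^2 + u^2" unfolding x Sq_def by simp
    have ind: "indicator (A i) x = (if r < Sq x then 1 else (0::real))" unfolding A_def r_def by (simp add: indicator_def)
    have P: "c0 - c0 * (if r < Sq x then 1 else 0) - C * exp (\<beta> * Ham \<alpha> V1 x) - En / sqrt r
       \<le> Psi r (Sq x) * (Phi1 b1 n (Ham \<alpha> V1 x) * (\<gamma> * (T + Tinf - a^2)) + Phi2 b1 n (Ham \<alpha> V1 x) * (\<gamma> * (T * a^2 + Tinf * c^2)))
       + 2 * Phi b1 n (Ham \<alpha> V1 x) * Psi1 r (Sq x) * (a * q + c * u)"
      using pointwise_real[OF bfacts(1,2,3) n0 M0 assms(2,3,4) r0 bfacts(4) Y S]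
      unfolding c0_def W_def En_def C_def by simp
    show ?thesis using P gen_eq[of x] ind unfolding lb_def g_def x by simp
  qed
  have ef: "emeasure \<mu> (A i) < \<infinity>" using emeasure_finite[of "A i"] by (simp add: less_top[symmetric])
  have i1: "integrable \<mu> (\<lambda>x. c0 * indicator (A i) x :: real)"
    by (rule integrable_mult_right) (rule integrable_real_indicator[OF Am ef])
  have i2: "integrable \<mu> (\<lambda>x. C * g x)" by (rule integrable_mult_right[OF gint])
  have i3: "integrable \<mu> (\<lambda>x. c0 - c0 * indicator (A i) x :: real)" by (rule Bochner_Integration.integrable_diff[OF integrable_const i1])
  have i4: "integrable \<mu> (\<lambda>x. c0 - c0 * indicator (A i) x - C * g x)" by (rule Bochner_Integration.integrable_diff[OF i3 i2])
  have lbint: "integrable \<mu> lb" unfolding lb_def by (rule Bochner_Integration.integrable_diff[OF i4 integrable_const])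
  have "(\<integral>x. lb x \<partial>\<mu>) \<le> (\<integral>x. gen \<alpha> \<gamma> T Tinf V1 f x \<partial>\<mu>)"
    by (rule integral_mono[OF lbint ginv(1) pw])
  then have le0: "(\<integral>x. lb x \<partial>\<mu>) \<le> 0" using ginv(2) by simp
  have lbval: "(\<integral>x. lb x \<partial>\<mu>) = c0 - c0 * measure \<mu> (A i) - C * I - En / sqrt r"
    unfolding lb_def I_def using i1 i2 i3 i4 Am[of i] using prob_space[unfolded sp] by (simp add: integral_diff sp)
  have "c0 * measure \<mu> (A i) \<le> c0 * (1/4)" using mA c00 by (intro mult_left_mono) auto
  then show False using le0 lbval CI Er c00 by linarith
qed

end
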